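(* Let $\Lambda:\mathbb{R}\to[0,1]$ be a decreasing function. Then for every $X\in L^0$, $$\mathrm{VaR}_{\Lambda}(X)=\sup_{x\in\mathbb{R}}\left(\mathrm{VaR}_{\Lambda(x)}(X)\wedge x\right)=\inf_{x\in\mathbb{R}}\left(\mathrm{VaR}_{\Lambda(x)}(X)\vee x\right),$$ and $$\mathrm{VaR}^+_{\Lambda}(X)=\sup_{x\in\mathbb{R}}\left(\mathrm{VaR}^+_{\Lambda(x)}(X)\wedge x\right)=\inf_{x\in\mathbb{R}}\left(\mathrm{VaR}^+_{\Lambda(x)}(X)\vee x\right).$$
   Context: $(\Omega,\mathcal F,\mathbb P)$ is an atomless probability space and $L^0$ is the set of all random variables on it. "Decreasing" means weakly decreasing. $x\wedge y=\min\{x,y\}$, $x\vee y=\max\{x,y\}$. For $\alpha\in[0,1]$ and $X\in L^0$: $\mathrm{VaR}_\alpha(X)=\inf\{x\in\mathbb{R}:\mathbb P(X\le x)\ge\alpha\}$ and $\mathrm{VaR}^+_\alpha(X)=\inf\{x\in\mathbb{R}:\mathbb P(X\le x)>\alpha\}$ (with $\inf\mathbb{R}=-\infty$, $\inf\emptyset=\infty$; so $\mathrm{VaR}_0=-\infty$, $\mathrm{VaR}^+_1=\infty$). For a decreasing $\Lambda:\mathbb{R}\to[0,1]$ and $X\in L^0$: $\mathrm{VaR}_\Lambda(X)=\inf\{x\in\mathbb{R}:\mathbb P(X\le x)\ge\Lambda(x)\}$ and $\mathrm{VaR}^+_\Lambda(X)=\inf\{x\in\mathbb{R}:\mathbb P(X\le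 x)>\Lambda(x)\}$. *)

theory Defs
  imports "HOL-Probability.Probability"
begin

definition atomless :: "'a measure \<Rightarrow> bool" where
  "atomless M \<longleftrightarrow> (\<forall>A\<in>sets M. measure M A > 0 \<longrightarrow>
      (\<exists>B\<in>sets M. B \<subseteq> A \<and> 0 < measure M B \<and> measure M B < measure M A))"

definition cdf_at :: "'a measure \<Rightarrow> ('a \<Rightarrow> real) \<Rightarrow> real \<Rightarrow> real" where
  "cdf_at M X x = measure M {\<omega>\<in>space M. X \<omega> \<le> x}"

text \<open>Value-at-risk, valued in the extended reals (Inf of the empty set is \<infinity>,
  Inf of an unbounded-below set of reals is -\<infinity>).\<close>
definition VaR :: "'a measure \<Rightarrow> ('a \<Rightarrow> real) \<Rightarrow> real \<Rightarrow> ereal" where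
  "VaR M X \<alpha> = Inf (ereal ` {x. cdf_at M X x \<ge> \<alpha>})"

definition VaR_plus :: "'a measure \<Rightarrow> ('a \<Rightarrow> real) \<Rightarrow> real \<Rightarrow> ereal" where
  "VaR_plus M X \<alpha> = Inf (ereal ` {x. cdf_at M X x > \<alpha>})"

definition VaR_Lambda :: "'a measure \<Rightarrow> ('a \<Rightarrow> real) \<Rightarrow> (real \<Rightarrow> real) \<Rightarrow> ereal" where
  "VaR_Lambda M X \<Lambda> = Inf (ereal ` {x. cdf_at M X x \<ge> \<Lambda> x})"

definition VaR_Lambda_plus :: "'a measure \<Rightarrow> ('a \<Rightarrow> real) \<Rightarrow> (real \<Rightarrow> real) \<Rightarrow> ereal" where
  "VaR_Lambda_plus M X \<Lambda> = Inf (ereal ` {x. cdf_at M X x > \<Lambda> x})"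

end

theory Submission
  imports Defs
begin

lemma core:
  fixes F L :: "real \<Rightarrow> real" and P :: "real \<Rightarrow> real \<Rightarrow> bool"
  assumes mF: "mono F" and aL: "antimono L"
    and P: "\<And>f l f' l'. P f l \<Longrightarrow> f \<le> f' \<Longrightarrow> l' \<le> l \<Longrightarrow> P f' l'"
  shows "Inf (ereal ` {x. P (F x) (L x)}) = (SUP t. min (Inf (ereal ` {x. P (F x) (L t)})) (ereal t))
       \<and> Inf (ereal ` {x. P (F x) (L x)}) = (INF t. max (Inf (ereal ` {x. P (F x) (L t)})) (ereal t))"
proof -
  define A where "A = {x. P (F x) (L x)}"
  define B where "B = (\<lambda>t. {x. P (F x) (L t)})"
  define V where "V = Inf (ereal ` A)"
  define W where "W = (\<lambda>t. Inf (ereal ` B t))"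
  have a: "V \<le> W t" if "ereal t < V" for t
    unfolding W_def
  proof (rule Inf_greatest)
    fix z assume "z \<in> ereal ` B t"
    then obtain x where x: "z = ereal x" "P (F x) (L t)" by (auto simp: B_def)
    show "V \<le> z"
    proof (cases "x \<le> t")
      case True
      have "P (F t) (L t)" using P[OF x(2)] True mF by (simp add: mono_def)
      hence "V \<le> ereal t" unfolding V_def A_def by (auto intro: Inf_lower)
      with that show ?thesis by simp
    next
      case False
      have "P (F x) (L x)" using P[OF x(2)] False aL by (simp add: antimono_def)
      thus ?thesis unfolding V_def A_def x(1) by (auto intro: Inf_lower)
    qed
  qed
  have b: "W t \<le> V" if "V < ereal t" for t
  proof (rule dense_ge)
    fix y assume "V < y"
    then obtain a1 where a1: "a1 \<in> A" "ereal a1 < y" unfolding V_def by (auto simp: Inf_less_iff)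
    from that obtain a2 where a2: "a2 \<in> A" "ereal a2 < ereal t" unfolding V_def by (auto simp: Inf_less_iff)
    define a where "a = min a1 a2"
    have aA: "a \<in> A" using a1 a2 by (auto simp: a_def min_def)
    have "a < t" using a2 by (auto simp: a_def)
    hence "a \<in> B t" using aA P aL unfolding A_def B_def antimono_def by auto
    hence "W t \<le> ereal a" unfolding W_def by (auto intro: Inf_lower)
    also have "ereal a \<le> ereal a1" by (simp add: a_def)
    also have "ereal a1 \<le> y" using a1(2) by (rule less_imp_le)
    finally show "W t \<le> y" .
  qed
  have s1: "(SUP t. min (W t) (ereal t)) \<le> V"
  proof (rule SUP_least)
    fix t show "min (W t) (ereal t) \<le> V"
    proof (cases "ereal t \<le> V")
      case True thus ?thesis by (rule min.coboundedI2)
    next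
      case False thus ?thesis using b[of t] by (intro min.coboundedI1) simp
    qed
  qed
  have s2: "V \<le> (SUP t. min (W t) (ereal t))"
  proof (rule dense_le)
    fix y assume y: "y < V"
    show "y \<le> (SUP t. min (W t) (ereal t))"
    proof (cases y)
      case (real r)
      have "ereal r < V" using y real by simp
      hence "ereal r \<le> W r" using a[of r] by (meson order.trans less_imp_le)
      hence "min (W r) (ereal r) = ereal r" by (rule min_absorb2)
      hence "ereal r \<le> (SUP t. min (W t) (ereal t))" using SUP_upper[of r UNIV "\<lambda>t. min (W t) (ereal t)"] by simp
      thus ?thesis using real by simp
    next
      case PInf thus ?thesis using y by simp
    next
      case MInf thus ?thesis by simp
    qed
  qed
  have i1: "V \<le> (INF t. max (W t) (ereal t))"
  proof (rule INF_greatest)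
    fix t show "V \<le> max (W t) (ereal t)"
    proof (cases "ereal t < V")
      case True thus ?thesis using a[of t] by (intro max.coboundedI1) simp
    next
      case False thus ?thesis by (intro max.coboundedI2) simp
    qed
  qed
  have i2: "(INF t. max (W t) (ereal t)) \<le> V"
  proof (rule dense_ge)
    fix y assume y: "V < y"
    show "(INF t. max (W t) (ereal t)) \<le> y"
    proof (cases y)
      case (real r)
      have "V < ereal r" using y real by simp
      hence "W r \<le> ereal r" using b[of r] by (meson order.trans less_imp_le)
      hence "max (W r) (ereal r) = ereal r" by (rule max_absorb2)
      hence "(INF t. max (W t) (ereal t)) \<le> ereal r" using INF_lower[of r UNIV "\<lambda>t. max (W t) (ereal t)"] by simp
      thus ?thesis using real by simp
    next
      case PInf thus ?thesis by simp
    next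
      case MInf thus ?thesis using y by simp
    qed
  qed
  show ?thesis using s1 s2 i1 i2 unfolding V_def W_def A_def B_def by auto
qed

theorem proposition1:
  fixes M :: "'a measure" and X :: "'a \<Rightarrow> real" and \<Lambda> :: "real \<Rightarrow> real"
  assumes "prob_space M" and "atomless M"
    and "antimono \<Lambda>" and "\<And>x. 0 \<le> \<Lambda> x \<and> \<Lambda> x \<le> 1"
    and "X \<in> borel_measurable M"
  shows "VaR_Lambda M X \<Lambda> = (SUP x. min (VaR M X (\<Lambda> x)) (ereal x))
       \<and> VaR_Lambda M X \<Lambda> = (INF x. max (VaR M X (\<Lambda> x)) (ereal x))
       \<and> VaR_Lambda_plus M X \<Lambda> = (SUP x. min (VaR_plus M X (\<Lambda> x)) (ereal x))
       \<and> VaR_Lambda_plus M X \<Lambda> = (INF x. max (VaR_plus M X (\<Lambda> x)) (ereal x))"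
proof -
  interpret prob_space M by fact
  have mF: "mono (cdf_at M X)"
  proof (rule monoI)
    fix x y :: real assume "x \<le> y"
    moreover have "{\<omega>\<in>space M. X \<omega> \<le> y} \<in> sets M" using assms(5) by measurable
    ultimately show "cdf_at M X x \<le> cdf_at M X y" unfolding cdf_at_def
      by (intro finite_measure_mono) auto
  qed
  note c1 = core[OF mF assms(3), of "\<lambda>f l. l \<le> f"]
  note c2 = core[OF mF assms(3), of "\<lambda>f l. l < f"]
  show ?thesis using c1 c2 unfolding VaR_Lambda_def VaR_Lambda_plus_def VaR_def VaR_plus_def
    by auto
qed

end
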